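(* Let $\mathcal C$ be an infinitary clone $\tau$-algebra and $a\in C$. Then $a$ is central if and only if the following hold for all elements of $C$: (C1) $q(a,x,x,\dots)=x$; (C2) $q\big(a,\,q(a,x_0^0,x_0^1,\dots),\,q(a,x_1^0,x_1^1,\dots),\,q(a,x_2^0,x_2^1,\dots),\dots\big)=q(a,x_0^0,x_1^1,x_2^2,\dots)$; (C3) $q\big(a,\,q(y_0,z_0^0,z_1^0,\dots),\,q(y_1,z_0^1,z_1^1,\dots),\dots\big)=q\big(q(a,y_0,y_1,\dots),\,q(a,z_0^0,z_0^1,\dots),\,q(a,z_1^0,z_1^1,\dots),\dots\big)$.
   Context: $\tau$ is a set of $\omega$-ary operation symbols disjoint from $\{q\}\cup\{e_i:i\in\omega\}$. An infinitary clone $\tau$-algebra is an algebra $\mathcal C$ with constants $e_i$ ($i\in\omega$), a constant $f$ for each $f\in\tau$, and an $\omega$-ary operation $q$, satisfying (N1) $q(e_i,x_0,x_1,\dots)=x_i$; (N2) $q(x,e_0,e_1,\dots)=x$; (N3) $q(q(x,y_0,y_1,\dots),\boldsymbol z)=q(x,q(y_0,\boldsymbol z),q(y_1,\boldsymbol z),\dots)$ with $\boldsymbol z=(z_0,z_1,\dots)$. A sequence $(\theta_0,\theta_1,\dots)$ of congruences of $\mathcal C$ is a sequence of complementary factor congruences if $\bigcap_{i\in\omega}\theta_i$ is the identity relation on $C$ and for every $s\in C^\omega$ there is $b\in C$ with $(b,s_i)\in\theta_i$ for all $i\in\omega$. An element $a\in C$ is central if the principal congruences $\theta(a,e_i)$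 generated by the pairs $(a,e_i)$, $i\in\omega$, form a sequence of complementary factor congruences. *)

theory Defs
  imports Main
begin

text \<open>An infinitary clone tau-algebra, given by its carrier C, the constants e_i,
 the constants fc g for g in T (the symbols of tau), and the omega-ary operation q.\<close>

definition seq_in :: "'a set \<Rightarrow> (nat \<Rightarrow> 'a) \<Rightarrow> bool" where
  "seq_in C s \<longleftrightarrow> (\<forall>i. s i \<in> C)"

definition clone_alg ::
  "'a set \<Rightarrow> (nat \<Rightarrow> 'a) \<Rightarrow> ('a \<Rightarrow> (nat \<Rightarrow> 'a) \<Rightarrow> 'a) \<Rightarrow> 'b set \<Rightarrow> ('b \<Rightarrow> 'a) \<Rightarrow> bool" where
  "clone_alg C e q T fc \<longleftrightarrow>
     (\<forall>i. e i \<in> C) \<and> (\<forall>g\<in>T. fc g \<in> C) \<and>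
     (\<forall>x\<in>C. \<forall>y. seq_in C y \<longrightarrow> q x y \<in> C) \<and>
     (\<forall>i. \<forall>x. seq_in C x \<longrightarrow> q (e i) x = x i) \<and>
     (\<forall>x\<in>C. q x e = x) \<and>
     (\<forall>x\<in>C. \<forall>y z. seq_in C y \<longrightarrow> seq_in C z \<longrightarrow>
        q (q x y) z = q x (\<lambda>i. q (y i) z))"

text \<open>Congruences of the algebra (constants are trivially respected; q must be).\<close>
definition congruence :: "'a set \<Rightarrow> ('a \<Rightarrow> (nat \<Rightarrow> 'a) \<Rightarrow> 'a) \<Rightarrow> 'a rel \<Rightarrow> bool" where
  "congruence C q \<theta> \<longleftrightarrow> equiv C \<theta> \<and>
     (\<forall>x x' y y'. (x, x') \<in> \<theta> \<longrightarrow> seq_in C y \<longrightarrow> seq_in C y' \<longrightarrow>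
        (\<forall>i. (y i, y' i) \<in> \<theta>) \<longrightarrow> (q x y, q x' y') \<in> \<theta>)"

definition principal_cong :: "'a set \<Rightarrow> ('a \<Rightarrow> (nat \<Rightarrow> 'a) \<Rightarrow> 'a) \<Rightarrow> 'a \<Rightarrow> 'a \<Rightarrow> 'a rel" where
  "principal_cong C q a b = \<Inter> {\<theta>. congruence C q \<theta> \<and> (a, b) \<in> \<theta>}"

definition compl_factor_congs ::
  "'a set \<Rightarrow> ('a \<Rightarrow> (nat \<Rightarrow> 'a) \<Rightarrow> 'a) \<Rightarrow> (nat \<Rightarrow> 'a rel) \<Rightarrow> bool" where
  "compl_factor_congs C q \<Theta> \<longleftrightarrow>
     (\<forall>i. congruence C q (\<Theta> i)) \<and>
     (\<Inter>i. \<Theta> i) = Id_on C \<and>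
     (\<forall>s. seq_in C s \<longrightarrow> (\<exists>b\<in>C. \<forall>i. (b, s i) \<in> \<Theta> i))"

definition central :: "'a set \<Rightarrow> (nat \<Rightarrow> 'a) \<Rightarrow> ('a \<Rightarrow> (nat \<Rightarrow> 'a) \<Rightarrow> 'a) \<Rightarrow> 'a \<Rightarrow> bool" where
  "central C e q a \<longleftrightarrow> compl_factor_congs C q (\<lambda>i. principal_cong C q a (e i))"

end

theory Submission
  imports Defs
begin

definition phi :: "'a set \<Rightarrow> ('a \<Rightarrow> (nat\<Rightarrow>'a) \<Rightarrow> 'a) \<Rightarrow> 'a \<Rightarrow> nat \<Rightarrow> 'a rel" where
  "phi C q a i = {(x,y). x\<in>C \<and> y\<in>C \<and> (\<forall>w. seq_in C w \<longrightarrow> q a (w(i:=x)) = q a (w(i:=y)))}"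

context
  fixes C :: "'a set" and e :: "nat \<Rightarrow> 'a" and q :: "'a \<Rightarrow> (nat \<Rightarrow> 'a) \<Rightarrow> 'a"
    and T :: "'b set" and fc :: "'b \<Rightarrow> 'a" and a :: 'a
  assumes CA: "clone_alg C e q T fc" and aC: "a \<in> C"
begin

lemma cl: "x \<in> C \<Longrightarrow> seq_in C y \<Longrightarrow> q x y \<in> C"
  using CA unfolding clone_alg_def by blast
lemma n1: "seq_in C x \<Longrightarrow> q (e i) x = x i"
  using CA unfolding clone_alg_def by blast
lemma n2: "x \<in> C \<Longrightarrow> q x e = x"
  using CA unfolding clone_alg_def by blast
lemma eC: "e i \<in> C"
  using CA unfolding clone_alg_def by blast
lemma seq_e: "seq_in C e" using eC by (simp add: seq_in_def)
lemma seq_const: "x \<in> C \<Longrightarrow> seq_in C (\<lambda>_. x)" by (simp add: seq_in_def)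
lemma seq_upd: "seq_in C w \<Longrightarrow> x \<in> C \<Longrightarrow> seq_in C (w(i:=x))" by (simp add: seq_in_def)

lemma fwd:
  assumes cen: "central C e q a"
  shows "((\<forall>x\<in>C. q a (\<lambda>_. x) = x) \<and>
     (\<forall>x :: nat \<Rightarrow> nat \<Rightarrow> 'a. (\<forall>i j. x i j \<in> C) \<longrightarrow>
        q a (\<lambda>i. q a (x i)) = q a (\<lambda>i. x i i)) \<and>
     (\<forall>(y :: nat \<Rightarrow> 'a) (z :: nat \<Rightarrow> nat \<Rightarrow> 'a). seq_in C y \<longrightarrow> (\<forall>i j. z i j \<in> C) \<longrightarrow>
        q a (\<lambda>j. q (y j) (\<lambda>i. z i j)) = q (q a y) (\<lambda>i. q a (z i))))"
proof -
  define \<theta> where "\<theta> i = principal_cong C q a (e i)" for i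
  have cong: "congruence C q (\<theta> i)" for i using cen
    unfolding central_def compl_factor_congs_def \<theta>_def by blast
  have inter: "(\<Inter>i. \<theta> i) = Id_on C" using cen
    unfolding central_def compl_factor_congs_def \<theta>_def by blast
  have ae: "(a, e i) \<in> \<theta> i" for i unfolding \<theta>_def principal_cong_def by blast
  have eqv: "equiv C (\<theta> i)" for i using cong unfolding congruence_def by blast
  have refl: "x \<in> C \<Longrightarrow> (x,x) \<in> \<theta> i" for x i using eqv[of i]
    unfolding equiv_def refl_on_def by blast
  have sym: "(x,y) \<in> \<theta> i \<Longrightarrow> (y,x) \<in> \<theta> i" for x y i using eqv[of i]
    by (meson equiv_def symD)
  have trans: "(x,y) \<in> \<theta> i \<Longrightarrow> (y,z) \<in> \<theta> i \<Longrightarrow> (x,z) \<in> \<theta> i" for x y z i using eqv[of i]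
    by (meson equiv_def transD)
  have compat: "(x,x') \<in> \<theta> i \<Longrightarrow> seq_in C y \<Longrightarrow> seq_in C y' \<Longrightarrow> (\<forall>k. (y k, y' k) \<in> \<theta> i)
     \<Longrightarrow> (q x y, q x' y') \<in> \<theta> i" for x x' y y' i using cong[of i] unfolding congruence_def by blast
  have key: "seq_in C s \<Longrightarrow> (q a s, s i) \<in> \<theta> i" for s i
  proof -
    assume s: "seq_in C s"
    have "(q a s, q (e i) s) \<in> \<theta> i"
      using compat[OF ae s s] refl s by (simp add: seq_in_def)
    then show ?thesis using n1[OF s] by simp
  qed
  have eq: "u \<in> C \<Longrightarrow> v \<in> C \<Longrightarrow> (\<forall>i. (u,v) \<in> \<theta> i) \<Longrightarrow> u = v" for u v
  proof -
    assume "\<forall>i. (u,v) \<in> \<theta> i"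
    then have "(u,v) \<in> (\<Inter>i. \<theta> i)" by blast
    then show "u = v" using inter by (auto simp: Id_on_def)
  qed
  have C1: "\<forall>x\<in>C. q a (\<lambda>_. x) = x"
  proof
    fix x assume x: "x \<in> C"
    show "q a (\<lambda>_. x) = x"
      by (rule eq) (use key[OF seq_const[OF x]] x cl[OF aC seq_const[OF x]] in auto)
  qed
  have C2: "\<forall>x :: nat \<Rightarrow> nat \<Rightarrow> 'a. (\<forall>i j. x i j \<in> C) \<longrightarrow>
        q a (\<lambda>i. q a (x i)) = q a (\<lambda>i. x i i)"
  proof (intro allI impI)
    fix x :: "nat \<Rightarrow> nat \<Rightarrow> 'a" assume x: "\<forall>i j. x i j \<in> C"
    have sx: "seq_in C (x i)" for i using x by (simp add: seq_in_def)
    have s1: "seq_in C (\<lambda>i. q a (x i))" using cl[OF aC sx] by (simp add: seq_in_def)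
    have s2: "seq_in C (\<lambda>i. x i i)" using x by (simp add: seq_in_def)
    show "q a (\<lambda>i. q a (x i)) = q a (\<lambda>i. x i i)"
    proof (rule eq)
      show "q a (\<lambda>i. q a (x i)) \<in> C" using cl[OF aC s1] .
      show "q a (\<lambda>i. x i i) \<in> C" using cl[OF aC s2] .
      show "\<forall>i. (q a (\<lambda>i. q a (x i)), q a (\<lambda>i. x i i)) \<in> \<theta> i"
      proof
        fix i
        have "(q a (\<lambda>i. q a (x i)), q a (x i)) \<in> \<theta> i" using key[OF s1] by simp
        moreover have "(q a (x i), x i i) \<in> \<theta> i" using key[OF sx] by simp
        moreover have "(q a (\<lambda>i. x i i), x i i) \<in> \<theta> i" using key[OF s2] by simp
        ultimately show "(q a (\<lambda>i. q a (x i)), q a (\<lambda>i. x i i)) \<in> \<theta> i"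
          using trans sym by blast
      qed
    qed
  qed
  have C3: "\<forall>(y :: nat \<Rightarrow> 'a) (z :: nat \<Rightarrow> nat \<Rightarrow> 'a). seq_in C y \<longrightarrow> (\<forall>i j. z i j \<in> C) \<longrightarrow>
        q a (\<lambda>j. q (y j) (\<lambda>i. z i j)) = q (q a y) (\<lambda>i. q a (z i))"
  proof (intro allI impI)
    fix y :: "nat \<Rightarrow> 'a" and z :: "nat \<Rightarrow> nat \<Rightarrow> 'a"
    assume y: "seq_in C y" and z: "\<forall>i j. z i j \<in> C"
    have yC: "y j \<in> C" for j using y by (simp add: seq_in_def)
    have sz: "seq_in C (z i)" for i using z by (simp add: seq_in_def)
    have szt: "seq_in C (\<lambda>i. z i j)" for j using z by (simp add: seq_in_def)
    have s1: "seq_in C (\<lambda>j. q (y j) (\<lambda>i. z i j))" using cl[OF yC szt] by (simp add: seq_in_def)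
    have s2: "seq_in C (\<lambda>i. q a (z i))" using cl[OF aC sz] by (simp add: seq_in_def)
    have qay: "q a y \<in> C" using cl[OF aC y] .
    show "q a (\<lambda>j. q (y j) (\<lambda>i. z i j)) = q (q a y) (\<lambda>i. q a (z i))"
    proof (rule eq)
      show "q a (\<lambda>j. q (y j) (\<lambda>i. z i j)) \<in> C" using cl[OF aC s1] .
      show "q (q a y) (\<lambda>i. q a (z i)) \<in> C" using cl[OF qay s2] .
      show "\<forall>j. (q a (\<lambda>j. q (y j) (\<lambda>i. z i j)), q (q a y) (\<lambda>i. q a (z i))) \<in> \<theta> j"
      proof
        fix j
        have "(q a (\<lambda>j. q (y j) (\<lambda>i. z i j)), q (y j) (\<lambda>i. z i j)) \<in> \<theta> j" using key[OF s1] by simp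
        moreover have "(q (q a y) (\<lambda>i. q a (z i)), q (y j) (\<lambda>i. z i j)) \<in> \<theta> j"
          using compat[OF key[OF y] s2 szt] key[OF sz] by simp
        ultimately show "(q a (\<lambda>j. q (y j) (\<lambda>i. z i j)), q (q a y) (\<lambda>i. q a (z i))) \<in> \<theta> j"
          using trans sym by blast
      qed
    qed
  qed
  show ?thesis using C1 C2 C3 by blast
qed


context
  assumes C1: "\<forall>x\<in>C. q a (\<lambda>_. x) = x"
  and C2: "\<forall>x :: nat \<Rightarrow> nat \<Rightarrow> 'a. (\<forall>i j. x i j \<in> C) \<longrightarrow>
        q a (\<lambda>i. q a (x i)) = q a (\<lambda>i. x i i)"
  and C3: "\<forall>(y :: nat \<Rightarrow> 'a) (z :: nat \<Rightarrow> nat \<Rightarrow> 'a). seq_in C y \<longrightarrow> (\<forall>i j. z i j \<in> C) \<longrightarrow>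
        q a (\<lambda>j. q (y j) (\<lambda>i. z i j)) = q (q a y) (\<lambda>i. q a (z i))"
begin

lemma upd: assumes w: "seq_in C w" and s: "seq_in C s"
  shows "q a (w(i:= q a s)) = q a (w(i:= s i))"
proof -
  define v where "v j = (if j = i then s else (\<lambda>_. w j))" for j
  have vC: "\<forall>j k. v j k \<in> C" using w s by (simp add: v_def seq_in_def)
  have "(\<lambda>j. q a (v j)) = w(i:= q a s)"
    using C1 w by (auto simp: v_def seq_in_def fun_eq_iff)
  moreover have "(\<lambda>j. v j j) = w(i:= s i)" by (auto simp: v_def fun_eq_iff)
  moreover have "q a (\<lambda>j. q a (v j)) = q a (\<lambda>j. v j j)" using C2 vC by blast
  ultimately show ?thesis by simp
qed

lemma phi_ae: "(a, e i) \<in> phi C q a i"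
proof -
  have "q a (w(i:=a)) = q a (w(i:=e i))" if w: "seq_in C w" for w
    using upd[OF w seq_e, of i] n2[OF aC] by simp
  then show ?thesis unfolding phi_def using aC eC by blast
qed

lemma phi_ex: assumes s: "seq_in C s" shows "(q a s, s i) \<in> phi C q a i"
proof -
  have "q a (w(i:=q a s)) = q a (w(i:=s i))" if w: "seq_in C w" for w
    using upd[OF w s] .
  moreover have "s i \<in> C" using s by (simp add: seq_in_def)
  ultimately show ?thesis unfolding phi_def using cl[OF aC s] by blast
qed

lemma phi_inter: assumes "\<forall>j. (x,y) \<in> phi C q a j" shows "x = y"
proof -
  have x: "x \<in> C" and y: "y \<in> C" using assms unfolding phi_def by auto
  define v where "v j = ((\<lambda>_. x)(j:=y) :: nat \<Rightarrow> 'a)" for j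
  have vC: "\<forall>j k. v j k \<in> C" using x y by (simp add: v_def)
  have "q a (v j) = q a ((\<lambda>_. x)(j:=x))" for j
    using assms seq_const[OF x] unfolding phi_def v_def by auto
  moreover have "(\<lambda>_. x)(j:=x) = (\<lambda>_::nat. x)" for j by (rule ext) simp
  ultimately have "q a (v j) = x" for j using C1 x by simp
  then have "x = q a (\<lambda>j. q a (v j))" using C1 x by simp
  also have "\<dots> = q a (\<lambda>j. v j j)" using C2 vC by blast
  also have "\<dots> = y" using C1 y by (simp add: v_def)
  finally show ?thesis .
qed

lemma phi_cong: "congruence C q (phi C q a i)"
  unfolding congruence_def
proof (intro conjI allI impI)
  show "equiv C (phi C q a i)"
    unfolding equiv_def refl_on_def sym_def trans_def phi_def by auto
next
  fix x x' y y'
  assume xx: "(x, x') \<in> phi C q a i" and y: "seq_in C y" and y': "seq_in C y'"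
    and yy: "\<forall>k. (y k, y' k) \<in> phi C q a i"
  have x: "x \<in> C" and x': "x' \<in> C" using xx unfolding phi_def by auto
  show "(q x y, q x' y') \<in> phi C q a i"
    unfolding phi_def
  proof (clarsimp, intro conjI allI impI)
    show "q x y \<in> C" using cl[OF x y] .
    show "q x' y' \<in> C" using cl[OF x' y'] .
    fix w assume w: "seq_in C w"
    have gen: "q a (w(i:=q u t)) = q (q a ((\<lambda>_. e 0)(i:=u))) (\<lambda>k. q a (w(i:=t k)))"
      if u: "u \<in> C" and t: "seq_in C t" for u t
    proof -
      define Y where "Y = (\<lambda>_. e 0)(i:=u)"
      define Z where "Z k = w(i:=t k)" for k
      have Y: "seq_in C Y" using u eC by (simp add: Y_def seq_in_def)
      have Z: "\<forall>k j. Z k j \<in> C" using w t by (simp add: Z_def seq_in_def)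
      have "(\<lambda>j. q (Y j) (\<lambda>k. Z k j)) = w(i:=q u t)"
      proof
        fix j show "q (Y j) (\<lambda>k. Z k j) = (w(i:=q u t)) j"
        proof (cases "j = i")
          case True then show ?thesis by (simp add: Y_def Z_def)
        next
          case False
          have "seq_in C (\<lambda>k. Z k j)" using Z by (simp add: seq_in_def)
          then show ?thesis using False n1 by (simp add: Y_def Z_def)
        qed
      qed
      moreover have "q a (\<lambda>j. q (Y j) (\<lambda>k. Z k j)) = q (q a Y) (\<lambda>k. q a (Z k))"
        using C3 Y Z by blast
      ultimately show ?thesis unfolding Y_def Z_def by simp
    qed
    have "q a ((\<lambda>_. e 0)(i:=x)) = q a ((\<lambda>_. e 0)(i:=x'))"
      using xx seq_const[OF eC] unfolding phi_def by auto
    moreover have "(\<lambda>k. q a (w(i:=y k))) = (\<lambda>k. q a (w(i:=y' k)))"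
      using yy w unfolding phi_def by auto
    ultimately show "q a (w(i := q x y)) = q a (w(i := q x' y'))"
      using gen[OF x y] gen[OF x' y'] by simp
  qed
qed

lemma phi_min: assumes th: "congruence C q \<theta>" and ae: "(a, e i) \<in> \<theta>"
  and xy: "(x,y) \<in> phi C q a i" shows "(x,y) \<in> \<theta>"
proof -
  have x: "x \<in> C" and y: "y \<in> C" using xy unfolding phi_def by auto
  have sw: "seq_in C ((\<lambda>_. y)(i:=x))" using x y by (simp add: seq_in_def)
  have "q a ((\<lambda>_. y)(i:=x)) = q a ((\<lambda>_. y)(i:=y))"
    using xy seq_const[OF y] unfolding phi_def by auto
  moreover have "(\<lambda>_. y)(i:=y) = (\<lambda>_::nat. y)" by (rule ext) simp
  ultimately have 1: "q a ((\<lambda>_. y)(i:=x)) = y" using C1 y by simp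
  have eqv: "equiv C \<theta>" using th unfolding congruence_def by blast
  have "\<forall>k. (((\<lambda>_. y)(i:=x)) k, ((\<lambda>_. y)(i:=x)) k) \<in> \<theta>"
    using eqv x y unfolding equiv_def refl_on_def by auto
  then have "(q a ((\<lambda>_. y)(i:=x)), q (e i) ((\<lambda>_. y)(i:=x))) \<in> \<theta>"
    using th ae sw unfolding congruence_def by blast
  then have "(y, x) \<in> \<theta>" using 1 n1[OF sw] by simp
  then show ?thesis using eqv unfolding equiv_def sym_def by blast
qed

lemma pc_phi: "principal_cong C q a (e i) = phi C q a i"
proof
  show "principal_cong C q a (e i) \<subseteq> phi C q a i"
    unfolding principal_cong_def using phi_cong phi_ae by blast
  show "phi C q a i \<subseteq> principal_cong C q a (e i)"
  proof
    fix p assume p: "p \<in> phi C q a i"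
    obtain x y where "p = (x,y)" by (cases p)
    then show "p \<in> principal_cong C q a (e i)"
      unfolding principal_cong_def using phi_min p by auto
  qed
qed

lemma bwd: "central C e q a"
  unfolding central_def compl_factor_congs_def pc_phi
proof (intro conjI allI impI)
  show "congruence C q (phi C q a i)" for i by (rule phi_cong)
  show "(\<Inter>i. phi C q a i) = Id_on C"
  proof
    show "(\<Inter>i. phi C q a i) \<subseteq> Id_on C"
    proof
      fix p assume "p \<in> (\<Inter>i. phi C q a i)"
      then obtain x y where p: "p = (x,y)" and "\<forall>j. (x,y) \<in> phi C q a j" by (cases p) auto
      then show "p \<in> Id_on C" using phi_inter[of x y] unfolding phi_def Id_on_def by auto
    qed
    show "Id_on C \<subseteq> (\<Inter>i. phi C q a i)" unfolding phi_def Id_on_def by auto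
  qed
  fix s assume s: "seq_in C s"
  show "\<exists>b\<in>C. \<forall>i. (b, s i) \<in> phi C q a i"
    using cl[OF aC s] phi_ex[OF s] by blast
qed

end

end

theorem lemma6p12:
  fixes C :: "'a set" and e :: "nat \<Rightarrow> 'a" and q :: "'a \<Rightarrow> (nat \<Rightarrow> 'a) \<Rightarrow> 'a"
    and T :: "'b set" and fc :: "'b \<Rightarrow> 'a" and a :: 'a
  assumes "clone_alg C e q T fc" and "a \<in> C"
  shows "central C e q a \<longleftrightarrow>
    ((\<forall>x\<in>C. q a (\<lambda>_. x) = x) \<and>
     (\<forall>x :: nat \<Rightarrow> nat \<Rightarrow> 'a. (\<forall>i j. x i j \<in> C) \<longrightarrow>
        q a (\<lambda>i. q a (x i)) = q a (\<lambda>i. x i i)) \<and>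
     (\<forall>(y :: nat \<Rightarrow> 'a) (z :: nat \<Rightarrow> nat \<Rightarrow> 'a). seq_in C y \<longrightarrow> (\<forall>i j. z i j \<in> C) \<longrightarrow>
        q a (\<lambda>j. q (y j) (\<lambda>i. z i j)) = q (q a y) (\<lambda>i. q a (z i))))"
  using fwd[OF assms] bwd[OF assms] by blast

end
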